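(* Let $\Sigma\subseteq\mathcal A^{\mathbf N}$ be a one-sided subshift over a finite alphabet $\mathcal A$ and let $F\subseteq\Sigma$ be a finite set with dense orbit. Then for every $n$, the number $e_l(n)$ of words of length $n$ of the language of $\Sigma$ that are not left-prolongable satisfies $e_l(n)\le|F|$.
   Context: $\Sigma$ is closed and invariant under the shift $S$. $F$ has dense orbit if $\bigcup_{\omega\in F}\{S^m\omega:m\ge0\}$ is dense in $\Sigma$. The language $\mathcal L$ of $\Sigma$ is the set of finite words occurring as subwords of elements of $\Sigma$. A word $v\in\mathcal L$ is left-prolongable if $av\in\mathcal L$ for some $a\in\mathcal A$. *)

theory Defs
  imports "HOL-Analysis.Analysis"
begin

definition seq_top :: "(nat \<Rightarrow> 'a) topology" where
  "seq_top = product_topology (\<lambda>_. discrete_topology (UNIV :: 'a set)) (UNIV :: nat set)"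

definition shift :: "(nat \<Rightarrow> 'a) \<Rightarrow> (nat \<Rightarrow> 'a)" where
  "shift \<omega> = (\<lambda>k. \<omega> (Suc k))"

definition subshift :: "(nat \<Rightarrow> 'a) set \<Rightarrow> bool" where
  "subshift \<Sigma> \<longleftrightarrow> closedin seq_top \<Sigma> \<and> shift ` \<Sigma> \<subseteq> \<Sigma>"

definition has_dense_orbit :: "(nat \<Rightarrow> 'a) set \<Rightarrow> (nat \<Rightarrow> 'a) set \<Rightarrow> bool" where
  "has_dense_orbit \<Sigma> F \<longleftrightarrow>
     \<Sigma> \<subseteq> seq_top closure_of (\<Union>\<omega>\<in>F. {(shift ^^ m) \<omega> | m. True})"

definition language :: "(nat \<Rightarrow> 'a) set \<Rightarrow> 'a list set" where
  "language \<Sigma> = {w. \<exists>\<omega>\<in>\<Sigma>. \<exists>i. w = map \<omega> [i..<i + length w]}"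

definition left_prolongable :: "(nat \<Rightarrow> 'a) set \<Rightarrow> 'a list \<Rightarrow> bool" where
  "left_prolongable \<Sigma> v \<longleftrightarrow> (\<exists>a. a # v \<in> language \<Sigma>)"

definition e_l :: "(nat \<Rightarrow> 'a) set \<Rightarrow> nat \<Rightarrow> nat" where
  "e_l \<Sigma> n = card {w \<in> language \<Sigma>. length w = n \<and> \<not> left_prolongable \<Sigma> w}"

end

theory Submission
  imports Defs
begin

lemma shift_iter: "(shift ^^ m) \<omega> k = \<omega> (m + k)"
  by (induction m arbitrary: k) (auto simp: shift_def)

lemma shift_iter_in: "subshift \<Sigma> \<Longrightarrow> \<sigma> \<in> \<Sigma> \<Longrightarrow> (shift ^^ m) \<sigma> \<in> \<Sigma>"
  by (induction m) (auto simp: subshift_def)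

lemma cyl_open: "openin seq_top {x. \<forall>k<n. x k = w ! k}"
proof -
  have o: "openin seq_top {x. x k = c}" for k c
  proof -
    have "continuous_map seq_top (discrete_topology UNIV) (\<lambda>x. x k)"
      unfolding seq_top_def by (rule continuous_map_product_projection) auto
    then have "openin seq_top {x \<in> topspace seq_top. x k \<in> {c}}"
      by (rule openin_continuous_map_preimage) simp
    moreover have "{x \<in> topspace seq_top. x k \<in> {c}} = {x. x k = c}"
      by (simp add: seq_top_def)
    ultimately show ?thesis by simp
  qed
  have "{x. \<forall>k<n. x k = w ! k} = topspace seq_top \<inter> (\<Inter>k\<in>{..<n}. {x. x k = w ! k})"
    by (auto simp: seq_top_def)
  moreover have "openin seq_top (topspace seq_top \<inter> (\<Inter>k\<in>{..<n}. {x. x k = w ! k}))"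
  proof (cases "n = 0")
    case True then show ?thesis by simp
  next
    case False
    then show ?thesis
      by (intro openin_Int openin_INT) (auto intro: o)
  qed
  ultimately show ?thesis by simp
qed

theorem lemma2p15:
  fixes \<Sigma> F :: "(nat \<Rightarrow> 'a::finite) set"
  assumes "subshift \<Sigma>"
    and "F \<subseteq> \<Sigma>" and "finite F"
    and "has_dense_orbit \<Sigma> F"
  shows "e_l \<Sigma> n \<le> card F"
proof -
  let ?W = "{w \<in> language \<Sigma>. length w = n \<and> \<not> left_prolongable \<Sigma> w}"
  have sub: "?W \<subseteq> (\<lambda>\<omega>. map \<omega> [0..<n]) ` F"
  proof
    fix w assume wW: "w \<in> ?W"
    then obtain \<sigma> i where s: "\<sigma> \<in> \<Sigma>" and w: "w = map \<sigma> [i..<i + n]" and ln: "length w = n"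
      by (auto simp: language_def)
    define \<tau> where "\<tau> = (shift ^^ i) \<sigma>"
    have "\<tau> \<in> \<Sigma>" using shift_iter_in[OF assms(1) s] by (simp add: \<tau>_def)
    then have "\<tau> \<in> seq_top closure_of (\<Union>\<omega>\<in>F. {(shift ^^ m) \<omega> | m. True})"
      using assms(4) by (auto simp: has_dense_orbit_def)
    moreover have "\<tau> \<in> {x. \<forall>k<n. x k = w ! k}"
      using w by (auto simp: \<tau>_def shift_iter)
    ultimately have "\<exists>y. y \<in> (\<Union>\<omega>\<in>F. {(shift ^^ m) \<omega> | m. True}) \<and> y \<in> {x. \<forall>k<n. x k = w ! k}"
      using cyl_open[of n w] unfolding in_closure_of by (elim conjE allE[of _ "{x. \<forall>k<n. x k = w ! k}"]) simp
    then obtain y where "y \<in> (\<Union>\<omega>\<in>F. {(shift ^^ m) \<omega> | m. True})"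
        and y: "\<forall>k<n. y k = w ! k" by blast
    then obtain \<omega> m where om: "\<omega> \<in> F" and ym: "y = (shift ^^ m) \<omega>" by auto
    have pre: "\<forall>k<n. \<omega> (m + k) = w ! k" using y ym by (simp add: shift_iter)
    have mw: "map \<omega> [m..<m + n] = w"
      by (rule nth_equalityI) (use ln pre in auto)
    show "w \<in> (\<lambda>\<omega>. map \<omega> [0..<n]) ` F"
    proof (cases m)
      case 0
      then show ?thesis using mw om by auto
    next
      case (Suc j)
      have "map \<omega> [j..<j + length (\<omega> j # w)] = \<omega> j # map \<omega> [m..<m + n]"
        using ln Suc by (simp add: upt_rec)
      then have "\<omega> j # w = map \<omega> [j..<j + length (\<omega> j # w)]" using mw by simp
      moreover have "\<omega> \<in> \<Sigma>" using om assms(2) by blast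
      ultimately have "\<omega> j # w \<in> language \<Sigma>"
        unfolding language_def
        by (intro CollectI bexI[where x=\<omega>] exI[where x=j]) assumption+
      then show ?thesis using wW by (auto simp: left_prolongable_def)
    qed
  qed
  have "card ?W \<le> card ((\<lambda>\<omega>. map \<omega> [0..<n]) ` F)"
    using sub assms(3) by (intro card_mono) auto
  also have "\<dots> \<le> card F" using assms(3) by (rule card_image_le)
  finally show ?thesis by (simp add: e_l_def)
qed

end
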